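(* Let $X$ be a two-sided quaternionic Banach space, $\mathbb{B}=\{q\in\mathbb{H}:|q|<1\}$, and $T\in\mathcal{B}(X)$. Suppose that $\sigma_S(T)\cap\partial\mathbb{B}\subseteq\{1\}$, that every $s\in\mathbb{H}$ with $|s|>1$ lies in $\rho_S(T)$, and that there exist constants $C>0$ and $0<\alpha\le1$ such that $$\|S_L^{-2}(s,T)\|\le\frac{C}{|s-1|^{1+\alpha}}\quad\text{for all } s\in\mathbb{H}\text{ with }|s|>1.$$ Then $T$ is power-bounded, i.e. $\sup_{n\in\mathbb{N}}\|T^n\|<\infty$.
   Context: $\mathbb{N}$ is the set of positive integers. $\mathbb{H}$ denotes the real algebra of quaternions; for $s\in\mathbb{H}$, $\overline{s}$ is its conjugate, $\mathrm{Re}(s)$ its real part, $|s|$ its modulus. $X$ is a two-sided vector space over $\mathbb{H}$ which is a Banach space; $\mathcal{B}(X)$ is the algebra of bounded right $\mathbb{H}$-linear operators on $X$ with identity $\mathcal{I}$ and operator norm; $(sT)(v)=s(Tv)$, $(Ts)(v)=T(sv)$. For $s\in\mathbb{H}$ put $Q_s(T)=T^2-2\mathrm{Re}(s)T+|s|^2\mathcal{I}$; $\rho_S(T)=\{s\in\mathbb{H}: Q_s(T)\text{ invertible in }\mathcal{B}(X)\}$ and $\sigma_S(T)=\mathbb{H}\setminus\rho_S(T)$ (the $S$-spectrum). For $s\in\rho_S(T)$, $$S_L^{-2}(s,T)=Q_s(T)^{-2}\big(\overline{s}^{\,2}\mathcal{I}-2T\overline{s}+T^2\big).$$ *)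

theory Defs
  imports "HOL-Analysis.Analysis"
begin

datatype quat = Quat (qRe: real) (qi: real) (qj: real) (qk: real)

definition qof_real :: "real \<Rightarrow> quat" where
  "qof_real r = Quat r 0 0 0"

definition qadd :: "quat \<Rightarrow> quat \<Rightarrow> quat" where
  "qadd p q = Quat (qRe p + qRe q) (qi p + qi q) (qj p + qj q) (qk p + qk q)"

definition qsub :: "quat \<Rightarrow> quat \<Rightarrow> quat" where
  "qsub p q = Quat (qRe p - qRe q) (qi p - qi q) (qj p - qj q) (qk p - qk q)"

definition qmult :: "quat \<Rightarrow> quat \<Rightarrow> quat" where
  "qmult p q = Quat
     (qRe p * qRe q - qi p * qi q - qj p * qj q - qk p * qk q)
     (qRe p * qi q + qi p * qRe q + qj p * qk q - qk p * qj q)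
     (qRe p * qj q - qi p * qk q + qj p * qRe q + qk p * qi q)
     (qRe p * qk q + qi p * qj q - qj p * qi q + qk p * qRe q)"

definition qcnj :: "quat \<Rightarrow> quat" where
  "qcnj q = Quat (qRe q) (- qi q) (- qj q) (- qk q)"

definition qnorm :: "quat \<Rightarrow> real" where
  "qnorm q = sqrt ((qRe q)\<^sup>2 + (qi q)\<^sup>2 + (qj q)\<^sup>2 + (qk q)\<^sup>2)"

text \<open>X is a real Banach space (type class banach) equipped with a left
  action lm (s v = lm s v) and a right action rm (v s = rm v s) of the
  quaternions, making it a two-sided H-vector space whose norm satisfies
  norm (s v) = |s| norm v = norm (v s).\<close>

definition two_sided_qbanach ::
  "(quat \<Rightarrow> 'x::banach \<Rightarrow> 'x) \<Rightarrow> ('x \<Rightarrow> quat \<Rightarrow> 'x) \<Rightarrow> bool" where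
  "two_sided_qbanach lm rm \<longleftrightarrow>
     (\<forall>a b v. lm (qmult a b) v = lm a (lm b v)) \<and>
     (\<forall>a b v. rm v (qmult a b) = rm (rm v a) b) \<and>
     (\<forall>a b v. lm a (rm v b) = rm (lm a v) b) \<and>
     (\<forall>a v w. lm a (v + w) = lm a v + lm a w) \<and>
     (\<forall>a b v. lm (qadd a b) v = lm a v + lm b v) \<and>
     (\<forall>a v w. rm (v + w) a = rm v a + rm w a) \<and>
     (\<forall>a b v. rm v (qadd a b) = rm v a + rm v b) \<and>
     (\<forall>r v. lm (qof_real r) v = r *\<^sub>R v) \<and>
     (\<forall>r v. rm v (qof_real r) = r *\<^sub>R v) \<and>
     (\<forall>a v. norm (lm a v) = qnorm a * norm v) \<and>
     (\<forall>a v. norm (rm v a) = qnorm a * norm v)"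

definition qops :: "('x::banach \<Rightarrow> quat \<Rightarrow> 'x) \<Rightarrow> ('x \<Rightarrow> 'x) set" where
  "qops rm = {T. bounded_linear T \<and> (\<forall>v a. T (rm v a) = rm (T v) a)}"

definition qinvertible :: "('x::banach \<Rightarrow> quat \<Rightarrow> 'x) \<Rightarrow> ('x \<Rightarrow> 'x) \<Rightarrow> bool" where
  "qinvertible rm A \<longleftrightarrow> (\<exists>B \<in> qops rm. B \<circ> A = id \<and> A \<circ> B = id)"

definition Qop :: "quat \<Rightarrow> ('x::banach \<Rightarrow> 'x) \<Rightarrow> ('x \<Rightarrow> 'x)" where
  "Qop s T = (\<lambda>v. T (T v) - (2 * qRe s) *\<^sub>R T v + (qnorm s)\<^sup>2 *\<^sub>R v)"

definition S_resolvent_set :: "('x::banach \<Rightarrow> quat \<Rightarrow> 'x) \<Rightarrow> ('x \<Rightarrow> 'x) \<Rightarrow> quat set" where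
  "S_resolvent_set rm T = {s. qinvertible rm (Qop s T)}"

definition S_spectrum :: "('x::banach \<Rightarrow> quat \<Rightarrow> 'x) \<Rightarrow> ('x \<Rightarrow> 'x) \<Rightarrow> quat set" where
  "S_spectrum rm T = UNIV - S_resolvent_set rm T"

text \<open>S_L^{-2}(s,T) = Q_s(T)^{-2} (conj(s)^2 I - 2 T conj(s) + T^2), where
  (conj(s)^2 I) v = conj(s)^2 v and (T conj(s)) v = T (conj(s) v).\<close>
definition SL2 :: "(quat \<Rightarrow> 'x::banach \<Rightarrow> 'x) \<Rightarrow> quat \<Rightarrow> ('x \<Rightarrow> 'x) \<Rightarrow> ('x \<Rightarrow> 'x)" where
  "SL2 lm s T =
     (let Qi = inv (Qop s T);
          A = (\<lambda>v. lm (qmult (qcnj s) (qcnj s)) v - 2 *\<^sub>R T (lm (qcnj s) v) + T (T v))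
      in Qi \<circ> Qi \<circ> A)"

end

theory Submission
  imports Defs
begin


typedef (overloaded) 'a endo = "UNIV :: ('a::real_normed_vector \<Rightarrow>\<^sub>L 'a) set" by simp

setup_lifting type_definition_endo

instantiation endo :: (real_normed_vector) real_normed_vector
begin
lift_definition norm_endo :: "'a endo \<Rightarrow> real" is norm .
lift_definition minus_endo :: "'a endo \<Rightarrow> 'a endo \<Rightarrow> 'a endo" is "(-)" .
lift_definition plus_endo :: "'a endo \<Rightarrow> 'a endo \<Rightarrow> 'a endo" is "(+)" .
lift_definition uminus_endo :: "'a endo \<Rightarrow> 'a endo" is "uminus" .
lift_definition zero_endo :: "'a endo" is "0" .
lift_definition scaleR_endo :: "real \<Rightarrow> 'a endo \<Rightarrow> 'a endo" is "scaleR" .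
definition dist_endo :: "'a endo \<Rightarrow> 'a endo \<Rightarrow> real" where "dist_endo a b = norm (a - b)"
definition "(uniformity :: ('a endo \<times> 'a endo) filter) = (INF e\<in>{0 <..}. principal {(x, y). dist x y < e})"
definition open_endo :: "'a endo set \<Rightarrow> bool"
  where "open_endo S = (\<forall>x\<in>S. \<forall>\<^sub>F (x', y) in uniformity. x' = x \<longrightarrow> y \<in> S)"
definition sgn_endo :: "'a endo \<Rightarrow> 'a endo" where "sgn_endo x = scaleR (inverse (norm x)) x"
instance
  apply standard
  unfolding dist_endo_def open_endo_def sgn_endo_def uniformity_endo_def
  apply (rule refl | (transfer, force simp: norm_triangle_ineq algebra_simps))+
  done
end

instantiation endo :: (real_normed_vector) "{ring,monoid_mult}"
begin
lift_definition times_endo :: "'a endo \<Rightarrow> 'a endo \<Rightarrow> 'a endo" is "(o\<^sub>L)" .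
lift_definition one_endo :: "'a endo" is "id_blinfun" .
instance
  apply standard
  apply (transfer, rule blinfun_eqI, simp add: blinfun.bilinear_simps)+
  done
end

instance endo :: (real_normed_vector) real_normed_algebra
  apply standard
  apply (transfer, rule blinfun_eqI, simp add: blinfun.bilinear_simps)+
  apply (transfer, rule norm_blinfun_compose)
  done






locale qsetup =
  fixes T :: "'r::{real_normed_algebra,ring,monoid_mult}"
    and l :: "complex \<Rightarrow> 'r" and Qi :: "complex \<Rightarrow> 'r" and C \<alpha> :: real
  assumes one_le: "norm (1::'r) \<le> 1"
    and l_mult: "\<And>z w. l (z*w) = l z * l w"
    and l_add: "\<And>z w. l (z+w) = l z + l w"
    and l_real: "\<And>c. l (complex_of_real c) = c *\<^sub>R 1"
    and l_norm: "\<And>z. norm (l z) \<le> cmod z"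
    and Qi_left: "\<And>z. cmod z > 1 \<Longrightarrow> Qi z * (T*T - (2*Re z) *\<^sub>R T + (cmod z)^2 *\<^sub>R 1) = 1"
    and Qi_right: "\<And>z. cmod z > 1 \<Longrightarrow> (T*T - (2*Re z) *\<^sub>R T + (cmod z)^2 *\<^sub>R 1) * Qi z = 1"
    and Cpos: "C > 0" and apos: "0 < \<alpha>" and ale: "\<alpha> \<le> 1"
    and est: "\<And>z. cmod z > 1 \<Longrightarrow>
       norm (Qi z * Qi z * (l (cnj z * cnj z) - 2 *\<^sub>R (T * l (cnj z)) + T*T)) \<le> C / cmod (z - 1) powr (1+\<alpha>)"
begin

definition Q where "Q z = T*T - (2*Re z) *\<^sub>R T + (cmod z)^2 *\<^sub>R 1"
definition R where "R z = Qi z * (l (cnj z) - T)"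
definition F2 where "F2 z = Qi z * Qi z * (l (cnj z * cnj z) - 2 *\<^sub>R (T * l (cnj z)) + T*T)"
definition Phi where "Phi z = R z * l z"

lemma QiQ: "cmod z > 1 \<Longrightarrow> Qi z * Q z = 1" using Qi_left by (simp add: Q_def)
lemma QQi: "cmod z > 1 \<Longrightarrow> Q z * Qi z = 1" using Qi_right by (simp add: Q_def)

lemma l_zero: "l 0 = 0" using l_real[of 0] by simp
lemma l_one: "l 1 = 1" using l_real[of 1] by simp
lemma l_diff: "l (z - w) = l z - l w"
  using l_add[of "z - w" w] by (simp add: algebra_simps)
lemma l_sum: "l (sum f A) = sum (\<lambda>k. l (f k)) A"
  by (induction A rule: infinite_finite_induct) (auto simp: l_zero l_add)
lemma l_pow: "l (z ^ n) = l z ^ n"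
  by (induction n) (auto simp: l_one l_mult)

lemma TQ: "T * Q z = Q z * T"
  by (simp add: Q_def algebra_simps)

lemma TQi: assumes "cmod z > 1" shows "T * Qi z = Qi z * T"
proof -
  have "Qi z * T = Qi z * T * (Q z * Qi z)" using QQi[OF assms] by simp
  also have "\<dots> = Qi z * (T * Q z) * Qi z" by (simp add: mult.assoc)
  also have "\<dots> = (Qi z * Q z) * T * Qi z" by (simp add: TQ mult.assoc)
  also have "\<dots> = T * Qi z" using QiQ[OF assms] by simp
  finally show ?thesis by simp
qed

lemma l_cnj_l: "l (cnj z) * l z = (cmod z)^2 *\<^sub>R 1"
proof -
  have "cnj z * z = complex_of_real ((cmod z)^2)"
    by (metis complex_norm_square of_real_power mult.commute)
  then show ?thesis by (metis l_mult l_real)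
qed

lemma l_l_cnj: "l z * l (cnj z) = (cmod z)^2 *\<^sub>R 1"
proof -
  have "z * cnj z = complex_of_real ((cmod z)^2)"
    by (metis complex_norm_square of_real_power)
  then show ?thesis by (metis l_mult l_real)
qed

lemma l_plus_cnj: "l z + l (cnj z) = (2 * Re z) *\<^sub>R 1"
proof -
  have "z + cnj z = complex_of_real (2 * Re z)"
    by (simp add: complex_add_cnj)
  then show ?thesis by (metis l_add l_real)
qed

lemma E1: assumes "cmod z > 1" shows "R z * l z - T * R z = 1"
proof -
  have a: "T * l z + T * l (cnj z) = (2 * Re z) *\<^sub>R T"
    using l_plus_cnj by (metis distrib_left mult_scaleR_right mult.right_neutral)
  have "R z * l z - T * R z = Qi z * (l (cnj z) * l z - T * l z) - (T * Qi z) * (l (cnj z) - T)"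
    by (simp add: R_def algebra_simps)
  also have "\<dots> = Qi z * ((cmod z)^2 *\<^sub>R 1 - T * l z - T * l (cnj z) + T * T)"
    by (simp add: TQi[OF assms] l_cnj_l algebra_simps)
  also have "\<dots> = Qi z * Q z"
    using a by (simp add: Q_def algebra_simps)
  finally show ?thesis using QiQ[OF assms] by simp
qed

lemma E2: assumes "cmod z > 1" shows "F2 z * l z - T * F2 z = R z"
proof -
  define X where "X = l (cnj z * cnj z) - 2 *\<^sub>R (T * l (cnj z)) + T*T"
  have TQi2: "T * (Qi z * Qi z) = Qi z * Qi z * T"
  proof -
    have "T * (Qi z * Qi z) = (T * Qi z) * Qi z" by (simp add: mult.assoc)
    also have "\<dots> = Qi z * (T * Qi z)" by (simp add: TQi[OF assms] mult.assoc)
    also have "\<dots> = Qi z * Qi z * T" by (simp add: TQi[OF assms] mult.assoc)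
    finally show ?thesis .
  qed
  have s1: "F2 z * l z - T * F2 z = Qi z * Qi z * (X * l z - T * X)"
  proof -
    have "F2 z * l z = Qi z * Qi z * (X * l z)" by (simp add: F2_def X_def mult.assoc)
    moreover have "T * F2 z = Qi z * Qi z * (T * X)"
    proof -
      have "T * F2 z = (T * (Qi z * Qi z)) * X" by (simp add: F2_def X_def mult.assoc)
      then show ?thesis by (simp add: TQi2 mult.assoc)
    qed
    ultimately show ?thesis by (simp add: right_diff_distrib)
  qed
  have e1: "l (cnj z * cnj z) = (2*Re z) *\<^sub>R l (cnj z) - (cmod z)^2 *\<^sub>R 1"
  proof -
    have "cnj z * cnj z = complex_of_real (2*Re z) * cnj z - complex_of_real ((cmod z)^2)"
    proof -
      have m: "cmod z * cmod z = Re z * Re z + Im z * Im z" by (metis cmod_power2 power2_eq_square)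
      show ?thesis by (simp add: complex_eq_iff power2_eq_square m algebra_simps)
    qed
    then show ?thesis by (simp only: l_diff l_mult l_real mult_scaleR_left mult_1_left)
  qed
  have b: "l (cnj z) * l z = (cmod z)^2 *\<^sub>R 1" by (rule l_cnj_l)
  have e2: "l z = (2 * Re z) *\<^sub>R 1 - l (cnj z)" using l_plus_cnj by (simp add: algebra_simps)
  have "X * l z - T * X = Q z * (l (cnj z) - T)"
    unfolding X_def Q_def e1
    apply (simp add: algebra_simps)
    apply (simp add: mult.assoc[symmetric] b)
    apply (simp add: e2 algebra_simps)
    apply (simp only: scaleR_2 scaleR_scaleR[symmetric])
    apply (simp add: algebra_simps)
    done
  moreover have "Qi z * Qi z * (Q z * (l (cnj z) - T)) = Qi z * ((Qi z * Q z) * (l (cnj z) - T))"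
    by (simp add: mult.assoc)
  ultimately show ?thesis using s1 QiQ[OF assms] by (simp add: R_def)
qed

end



definition zk :: "real \<Rightarrow> nat \<Rightarrow> nat \<Rightarrow> complex" where
  "zk r N k = complex_of_real r * cis (2 * pi * real k / real N)"

lemma cmod_zk: "r \<ge> 0 \<Longrightarrow> cmod (zk r N k) = r"
  by (simp add: zk_def norm_mult)

lemma zk_pow: "(zk r N k) ^ m = complex_of_real (r ^ m) * cis (2 * pi * real m / real N) ^ k"
proof -
  have "(zk r N k) ^ m = complex_of_real (r ^ m) * cis (2 * pi * real k / real N) ^ m"
    by (simp add: zk_def power_mult_distrib)
  also have "cis (2 * pi * real k / real N) ^ m = cis (2 * pi * real m / real N) ^ k"
    unfolding Complex.DeMoivre by (rule arg_cong[where f=cis]) (simp add: field_simps)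
  finally show ?thesis .
qed

lemma cis_eq_1_iff: assumes "N > 0"
  shows "cis (2 * pi * real m / real N) = 1 \<longleftrightarrow> N dvd m"
proof -
  have "cis (2 * pi * real m / real N) = exp (\<i> * complex_of_real (2 * pi * real m / real N))"
    by (simp add: cis_conv_exp)
  also have "\<dots> = 1 \<longleftrightarrow> (\<exists>n::int. 2 * pi * real m / real N = of_int (2 * n) * pi)"
    by (simp add: exp_eq_1)
  also have "\<dots> \<longleftrightarrow> (\<exists>n::int. real m = of_int n * real N)"
    using assms by (auto simp: field_simps)
  also have "\<dots> \<longleftrightarrow> N dvd m"
  proof
    assume "\<exists>n::int. real m = of_int n * real N"
    then obtain n :: int where h: "real m = of_int n * real N" by blast
    then have "int m = n * int N" by (metis of_int_eq_iff of_int_mult of_int_of_nat_eq)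
    then have "int N dvd int m" by simp
    then show "N dvd m" by simp
  next
    assume "N dvd m" then obtain q where "m = N * q" by blast
    then show "\<exists>n::int. real m = of_int n * real N" by (intro exI[of _ "int q"]) simp
  qed
  finally show ?thesis .
qed

lemma root_sum: assumes "N > 0"
  shows "(\<Sum>k<N. (zk r N k) ^ m) = (if N dvd m then of_nat N * complex_of_real (r ^ m) else 0)"
proof -
  define x where "x = cis (2 * pi * real m / real N)"
  have "(\<Sum>k<N. (zk r N k) ^ m) = complex_of_real (r ^ m) * (\<Sum>k<N. x ^ k)"
    by (simp add: zk_pow x_def sum_distrib_left)
  moreover have "x ^ N = 1"
  proof -
    have "real N * (2 * pi * real m / real N) = 2 * pi * real m" using assms by simp
    then show ?thesis unfolding x_def Complex.DeMoivre by simp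
  qed
  moreover have "x = 1 \<longleftrightarrow> N dvd m" unfolding x_def by (rule cis_eq_1_iff[OF assms])
  ultimately show ?thesis
    by (auto simp: sum_gp_strict)
qed

lemma zk_pow_N: "N > 0 \<Longrightarrow> (zk r N k) ^ N = complex_of_real (r ^ N)"
  using root_sum[of N r N] zk_pow[of r N k N] cis_eq_1_iff[of N N] by simp

context qsetup begin

lemma tele:
  assumes "F * l z - T * F = G"
  shows "(\<Sum>j<N. T^j * G * l (z^(N-1-j))) = F * l (z^N) - T^N * F"
proof (induction N)
  case 0 then show ?case by (simp add: l_one)
next
  case (Suc N)
  have "(\<Sum>j<Suc N. T^j * G * l (z^(Suc N-1-j))) = (\<Sum>j<N. T^j * G * l (z^(N-j))) + T^N * G"
    by (simp add: l_one)
  also have "(\<Sum>j<N. T^j * G * l (z^(N-j))) = (\<Sum>j<N. T^j * G * l (z^(N-1-j)) * l z)"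
  proof (rule sum.cong)
    fix j assume "j \<in> {..<N}"
    then have "N - j = Suc (N - 1 - j)" by auto
    then show "T^j * G * l (z^(N-j)) = T^j * G * l (z^(N-1-j)) * l z"
      by (simp add: l_mult mult.assoc power_Suc2 del: power_Suc)
  qed simp
  also have "\<dots> = (\<Sum>j<N. T^j * G * l (z^(N-1-j))) * l z" by (simp add: sum_distrib_right)
  also have "\<dots> = (F * l (z^N) - T^N * F) * l z" using Suc.IH by simp
  moreover have "l z * l (z^N) = l (z^N) * l z" by (metis l_mult mult.commute)
  moreover have "T * T^N = T^N * T" by (simp add: power_commutes)
  ultimately show ?case
    using assms by (simp add: algebra_simps l_mult mult.assoc)
qed

end



lemma dvd_window:
  fixes N m :: nat
  assumes "N * a < m" "m < N * (a + 2)" "N dvd m"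
  shows "m = N * (a + 1)"
proof -
  obtain q where q: "m = N * q" using assms(3) by blast
  have "a < q" using assms(1) q by (metis mult_less_cancel1)
  moreover have "q < a + 2" using assms(2) q by (metis mult_less_cancel1)
  ultimately have "q = a + 1" by simp
  then show ?thesis using q by simp
qed

lemma inner_delta:
  fixes f :: "nat \<Rightarrow> nat \<Rightarrow> 'a::comm_monoid_add"
  assumes "j < N" "n < N"
  shows "(\<Sum>l<N. if N dvd (2*N+n-j-l) then f (j+l) (2*N+n-j-l) else 0)
       = (if j \<le> n then f n (2*N) else f (n+N) N)"
proof -
  define l0 where "l0 = (if j \<le> n then n - j else N + n - j)"
  have l0N: "l0 < N" using assms by (auto simp: l0_def)
  have eq: "N dvd (2*N+n-j-l) \<longleftrightarrow> l = l0" if "l < N" for l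
  proof
    assume d: "N dvd (2*N+n-j-l)"
    show "l = l0"
    proof (cases "j \<le> n")
      case True
      have "2*N+n-j-l = N * (1 + 1)"
        by (rule dvd_window) (use True that assms d in auto)
      then show ?thesis using True that assms by (auto simp: l0_def)
    next
      case False
      have "2*N+n-j-l = N * (0 + 1)"
        by (rule dvd_window) (use False that assms d in auto)
      then show ?thesis using False that assms by (auto simp: l0_def)
    qed
  next
    assume "l = l0"
    then show "N dvd (2*N+n-j-l)" using assms
      by (cases "j \<le> n") (auto simp: l0_def)
  qed
  have "(\<Sum>l<N. if N dvd (2*N+n-j-l) then f (j+l) (2*N+n-j-l) else 0)
      = (\<Sum>l<N. if l = l0 then f (j+l) (2*N+n-j-l) else 0)"
  proof (rule sum.cong)
    fix l assume "l \<in> {..<N}"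
    then show "(if N dvd (2*N+n-j-l) then f (j+l) (2*N+n-j-l) else 0) = (if l = l0 then f (j+l) (2*N+n-j-l) else 0)"
      using eq[of l] by simp
  qed simp
  also have "\<dots> = f (j+l0) (2*N+n-j-l0)" using l0N by (simp add: sum.delta)
  also have "\<dots> = (if j \<le> n then f n (2*N) else f (n+N) N)"
    using assms by (auto simp: l0_def add.commute)
  finally show ?thesis .
qed

lemma outer_split:
  fixes A B :: "'a::real_vector"
  assumes "n < N"
  shows "(\<Sum>j<N. if j \<le> n then A else B) = real (n+1) *\<^sub>R A + real (N-1-n) *\<^sub>R B"
proof -
  have u: "{..<N} = {..n} \<union> {n<..<N}" using assms by auto
  have "(\<Sum>j<N. if j \<le> n then A else B) = (\<Sum>j\<in>{..n}. if j \<le> n then A else B) + (\<Sum>j\<in>{n<..<N}. if j \<le> n then A else B)"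
    unfolding u by (rule sum.union_disjoint) auto
  also have "(\<Sum>j\<in>{..n}. if j \<le> n then A else B) = (\<Sum>j\<in>{..n}. A)" by simp
  also have "(\<Sum>j\<in>{n<..<N}. if j \<le> n then A else B) = (\<Sum>j\<in>{n<..<N}. B)" by simp
  finally show ?thesis by (simp add: sum_constant_scaleR)
qed

context qsetup begin

lemma l_real_pow[simp]: "l (complex_of_real r ^ m) = r^m *\<^sub>R 1"
  by (metis of_real_power l_real)

lemma l_scal_pow[simp]: "l (of_nat N * complex_of_real r ^ m) = (real N * r^m) *\<^sub>R 1"
proof -
  have "of_nat N * complex_of_real r ^ m = complex_of_real (real N * r^m)" by simp
  then show ?thesis by (simp only: l_real)
qed

lemma D_comm: "(c *\<^sub>R 1 - T^N) * T^j = T^j * (c *\<^sub>R 1 - T^N)"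
proof -
  have "T^N * T^j = T^j * T^N" by (metis power_add add.commute)
  then show ?thesis by (simp add: algebra_simps)
qed

lemma DR: assumes "r > 1" "N > 0"
  shows "(r^N *\<^sub>R 1 - T^N) * R (zk r N k) = (\<Sum>j<N. T^j * l ((zk r N k)^(N-1-j)))"
proof -
  let ?z = "zk r N k"
  have c: "cmod ?z > 1" using assms by (simp add: cmod_zk)
  have "(\<Sum>j<N. T^j * 1 * l (?z^(N-1-j))) = R ?z * l (?z^N) - T^N * R ?z"
    by (rule tele[OF E1[OF c]])
  also have "l (?z^N) = r^N *\<^sub>R 1" using assms by (simp add: zk_pow_N l_real)
  finally show ?thesis by (simp add: algebra_simps)
qed

lemma DF2: assumes "r > 1" "N > 0"
  shows "(r^N *\<^sub>R 1 - T^N) * F2 (zk r N k) = (\<Sum>j<N. T^j * R (zk r N k) * l ((zk r N k)^(N-1-j)))"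
proof -
  let ?z = "zk r N k"
  have c: "cmod ?z > 1" using assms by (simp add: cmod_zk)
  have "(\<Sum>j<N. T^j * R ?z * l (?z^(N-1-j))) = F2 ?z * l (?z^N) - T^N * F2 ?z"
    by (rule tele[OF E2[OF c]])
  also have "l (?z^N) = r^N *\<^sub>R 1" using assms by (simp add: zk_pow_N l_real)
  finally show ?thesis by (simp add: algebra_simps)
qed

lemma DDF2: assumes "r > 1" "N > 0"
  shows "(r^N *\<^sub>R 1 - T^N) * (r^N *\<^sub>R 1 - T^N) * F2 (zk r N k)
     = (\<Sum>j<N. \<Sum>i<N. T^(j+i) * l ((zk r N k)^(2*N-2-j-i)))"
proof -
  let ?z = "zk r N k" and ?D = "r^N *\<^sub>R 1 - T^N"
  have "?D * ?D * F2 ?z = ?D * (\<Sum>j<N. T^j * R ?z * l (?z^(N-1-j)))"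
    by (simp add: DF2[OF assms] mult.assoc)
  also have "\<dots> = (\<Sum>j<N. T^j * (?D * R ?z) * l (?z^(N-1-j)))"
    by (simp add: sum_distrib_left mult.assoc[symmetric] D_comm)
  also have "\<dots> = (\<Sum>j<N. \<Sum>i<N. T^j * (T^i * l (?z^(N-1-i))) * l (?z^(N-1-j)))"
    by (simp add: DR[OF assms] sum_distrib_left sum_distrib_right)
  also have "\<dots> = (\<Sum>j<N. \<Sum>i<N. T^(j+i) * l (?z^(2*N-2-j-i)))"
  proof (intro sum.cong refl)
    fix j i assume "j \<in> {..<N}" "i \<in> {..<N}"
    then have e: "2*N-2-j-i = (N-1-i) + (N-1-j)" by auto
    show "T^j * (T^i * l (?z^(N-1-i))) * l (?z^(N-1-j)) = T^(j+i) * l (?z^(2*N-2-j-i))"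
      unfolding e power_add l_mult by (simp add: mult.assoc)
  qed
  finally show ?thesis .
qed

lemma l_scal: "l (of_nat N * complex_of_real x) = (real N * x) *\<^sub>R 1"
proof -
  have "of_nat N * complex_of_real x = complex_of_real (real N * x)" by simp
  then show ?thesis by (simp only: l_real)
qed

lemma ident2: assumes "r > 1" "N > 0" "n < N"
  shows "(r^N *\<^sub>R 1 - T^N) * (r^N *\<^sub>R 1 - T^N) * (\<Sum>k<N. F2 (zk r N k) * l ((zk r N k)^(n+2)))
     = real N *\<^sub>R (real (n+1) *\<^sub>R (r^(2*N) *\<^sub>R T^n) + real (N-1-n) *\<^sub>R (r^N *\<^sub>R T^(n+N)))"
proof -
  let ?D = "r^N *\<^sub>R 1 - T^N"
  have "?D * ?D * (\<Sum>k<N. F2 (zk r N k) * l ((zk r N k)^(n+2)))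
      = (\<Sum>k<N. (?D * ?D * F2 (zk r N k)) * l ((zk r N k)^(n+2)))"
    by (simp add: sum_distrib_left mult.assoc)
  also have "\<dots> = (\<Sum>k<N. \<Sum>j<N. \<Sum>i<N. T^(j+i) * l ((zk r N k)^(2*N+n-j-i)))"
  proof (intro sum.cong refl)
    fix k assume "k \<in> {..<N}"
    have "(?D * ?D * F2 (zk r N k)) * l ((zk r N k)^(n+2))
        = (\<Sum>j<N. \<Sum>i<N. T^(j+i) * l ((zk r N k)^(2*N-2-j-i)) * l ((zk r N k)^(n+2)))"
      by (simp add: DDF2[OF assms(1,2)] sum_distrib_right)
    also have "\<dots> = (\<Sum>j<N. \<Sum>i<N. T^(j+i) * l ((zk r N k)^(2*N+n-j-i)))"
    proof (intro sum.cong refl)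
      fix j i assume "j \<in> {..<N}" "i \<in> {..<N}"
      then have e: "2*N+n-j-i = (2*N-2-j-i) + (n+2)" by auto
      show "T^(j+i) * l ((zk r N k)^(2*N-2-j-i)) * l ((zk r N k)^(n+2)) = T^(j+i) * l ((zk r N k)^(2*N+n-j-i))"
        unfolding e power_add l_mult by (simp add: mult.assoc)
    qed
    finally show "(?D * ?D * F2 (zk r N k)) * l ((zk r N k)^(n+2)) = (\<Sum>j<N. \<Sum>i<N. T^(j+i) * l ((zk r N k)^(2*N+n-j-i)))" .
  qed
  also have "\<dots> = (\<Sum>j<N. \<Sum>i<N. T^(j+i) * l (\<Sum>k<N. (zk r N k)^(2*N+n-j-i)))"
  proof -
    have "(\<Sum>k<N. \<Sum>j<N. \<Sum>i<N. T^(j+i) * l ((zk r N k)^(2*N+n-j-i)))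
        = (\<Sum>j<N. \<Sum>k<N. \<Sum>i<N. T^(j+i) * l ((zk r N k)^(2*N+n-j-i)))" by (rule sum.swap)
    also have "\<dots> = (\<Sum>j<N. \<Sum>i<N. \<Sum>k<N. T^(j+i) * l ((zk r N k)^(2*N+n-j-i)))"
      by (intro sum.cong refl sum.swap)
    also have "\<dots> = (\<Sum>j<N. \<Sum>i<N. T^(j+i) * l (\<Sum>k<N. (zk r N k)^(2*N+n-j-i)))"
      by (simp only: l_sum sum_distrib_left)
    finally show ?thesis .
  qed
  also have "\<dots> = (\<Sum>j<N. \<Sum>i<N. if N dvd (2*N+n-j-i) then (\<lambda>a b. (real N * r^b) *\<^sub>R T^a) (j+i) (2*N+n-j-i) else 0)"
    by (intro sum.cong refl) (simp add: root_sum[OF assms(2)] l_scal l_zero)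
  also have "\<dots> = (\<Sum>j<N. if j \<le> n then (real N * r^(2*N)) *\<^sub>R T^n else (real N * r^N) *\<^sub>R T^(n+N))"
  proof (intro sum.cong refl)
    fix j assume "j \<in> {..<N}"
    then have jN: "j < N" by simp
    show "(\<Sum>i<N. if N dvd (2*N+n-j-i) then (\<lambda>a b. (real N * r^b) *\<^sub>R T^a) (j+i) (2*N+n-j-i) else 0)
      = (if j \<le> n then (real N * r^(2*N)) *\<^sub>R T^n else (real N * r^N) *\<^sub>R T^(n+N))"
      using inner_delta[OF jN assms(3), of "\<lambda>a b. (real N * r^b) *\<^sub>R T^a"] by simp
  qed
  also have "\<dots> = real (n+1) *\<^sub>R ((real N * r^(2*N)) *\<^sub>R T^n) + real (N-1-n) *\<^sub>R ((real N * r^N) *\<^sub>R T^(n+N))"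
    by (rule outer_split[OF assms(3)])
  finally show ?thesis by (simp add: algebra_simps)
qed

lemma ident1: assumes "r > 1" "N > 0"
  shows "(r^N *\<^sub>R 1 - T^N) * (\<Sum>k<N. Phi (zk r N k)) = (real N * r^N) *\<^sub>R 1"
proof -
  let ?D = "r^N *\<^sub>R 1 - T^N"
  have "?D * (\<Sum>k<N. Phi (zk r N k)) = (\<Sum>k<N. (?D * R (zk r N k)) * l (zk r N k))"
    by (simp add: Phi_def sum_distrib_left mult.assoc)
  also have "\<dots> = (\<Sum>k<N. \<Sum>j<N. T^j * l ((zk r N k)^(N-j)))"
  proof (intro sum.cong refl)
    fix k assume "k \<in> {..<N}"
    have "(?D * R (zk r N k)) * l (zk r N k) = (\<Sum>j<N. T^j * l ((zk r N k)^(N-1-j)) * l (zk r N k))"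
      by (simp add: DR[OF assms] sum_distrib_right)
    also have "\<dots> = (\<Sum>j<N. T^j * l ((zk r N k)^(N-j)))"
    proof (intro sum.cong refl)
      fix j assume "j \<in> {..<N}"
      then have e: "N-j = Suc (N-1-j)" by auto
      show "T^j * l ((zk r N k)^(N-1-j)) * l (zk r N k) = T^j * l ((zk r N k)^(N-j))"
        unfolding e by (simp add: l_mult mult.assoc power_Suc2 del: power_Suc)
    qed
    finally show "(?D * R (zk r N k)) * l (zk r N k) = (\<Sum>j<N. T^j * l ((zk r N k)^(N-j)))" .
  qed
  also have "\<dots> = (\<Sum>j<N. T^j * l (\<Sum>k<N. (zk r N k)^(N-j)))"
  proof -
    have "(\<Sum>k<N. \<Sum>j<N. T^j * l ((zk r N k)^(N-j))) = (\<Sum>j<N. \<Sum>k<N. T^j * l ((zk r N k)^(N-j)))"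
      by (rule sum.swap)
    also have "\<dots> = (\<Sum>j<N. T^j * l (\<Sum>k<N. (zk r N k)^(N-j)))"
      by (simp only: l_sum sum_distrib_left)
    finally show ?thesis .
  qed
  also have "\<dots> = (\<Sum>j<N. if j = 0 then (real N * r^N) *\<^sub>R 1 else 0)"
  proof (intro sum.cong refl)
    fix j assume j: "j \<in> {..<N}"
    show "T^j * l (\<Sum>k<N. (zk r N k)^(N-j)) = (if j = 0 then (real N * r^N) *\<^sub>R 1 else 0)"
    proof (cases "j = 0")
      case True then show ?thesis by (simp add: root_sum[OF assms(2)] l_scal)
    next
      case False
      then have "\<not> N dvd (N - j)" using j by (auto dest: dvd_imp_le)
      then show ?thesis using False by (simp add: root_sum[OF assms(2)] l_zero)
    qed
  qed
  also have "\<dots> = (real N * r^N) *\<^sub>R 1" using assms by (simp add: sum.delta)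
  finally show ?thesis .
qed

end



context qsetup begin

lemma norm_pow: "norm ((x::'r) ^ n) \<le> norm x ^ n"
proof (induction n)
  case 0 then show ?case using one_le by simp
next
  case (Suc n)
  have "norm (x ^ Suc n) \<le> norm x * norm (x ^ n)" by (simp add: norm_mult_ineq)
  also have "\<dots> \<le> norm x * norm x ^ n" by (rule mult_left_mono[OF Suc.IH]) simp
  finally show ?case by simp
qed

lemma l_bl: "bounded_linear l"
proof
  fix x y show "l (x + y) = l x + l y" by (rule l_add)
next
  fix c :: real and x
  have "c *\<^sub>R x = complex_of_real c * x" by (simp add: scaleR_conv_of_real)
  then show "l (c *\<^sub>R x) = c *\<^sub>R l x" by (simp add: l_mult l_real)
next
  show "\<exists>K. \<forall>x. norm (l x) \<le> norm x * K"
    by (intro exI[of _ 1]) (simp add: l_norm)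
qed

lemma l_cont: "continuous_on S l"
  by (rule linear_continuous_on[OF l_bl])

lemma Q_cont: "continuous_on S Q"
  unfolding Q_def by (intro continuous_intros)

lemma Qi_diff: assumes "cmod z > 1" "cmod w > 1"
  shows "Qi w - Qi z = Qi w * (Q z - Q w) * Qi z"
proof -
  have "Qi w * (Q z - Q w) * Qi z = Qi w * (Q z * Qi z) - (Qi w * Q w) * Qi z"
    by (simp add: algebra_simps mult.assoc)
  also have "\<dots> = Qi w - Qi z" using QiQ[OF assms(2)] QQi[OF assms(1)] by simp
  finally show ?thesis by simp
qed

lemma Qi_tendsto: assumes "cmod z > 1"
  shows "(Qi \<longlongrightarrow> Qi z) (at z within {w. cmod w > 1})"
proof -
  let ?S = "{w. cmod w > 1}"
  define K where "K = norm (Qi z) + 1"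
  have K: "K > 0" "norm (Qi z) \<le> K" unfolding K_def using norm_ge_zero[of "Qi z"] by linarith+
  have QT: "((\<lambda>w. Q w - Q z) \<longlongrightarrow> 0) (at z within ?S)"
  proof -
    have "(Q \<longlongrightarrow> Q z) (at z within ?S)"
      using Q_cont[of UNIV] by (simp add: continuous_on_def tendsto_at_iff_tendsto_nhds tendsto_within_subset[OF _ subset_UNIV] tendsto_mono[OF at_le])
    then show ?thesis by (rule LIM_zero)
  qed
  have ev1: "eventually (\<lambda>w. norm (Q w - Q z) < 1 / (2 * K)) (at z within ?S)"
    using tendstoD[OF QT, of "1/(2*K)"] K by simp
  have ev2: "eventually (\<lambda>w. w \<in> ?S) (at z within ?S)" by (simp add: eventually_at_filter)
  have bound: "eventually (\<lambda>w. norm (Qi w - Qi z) \<le> 2 * K * K * norm (Q w - Q z)) (at z within ?S)"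
    using ev1 ev2
  proof eventually_elim
    case (elim w)
    have w: "cmod w > 1" using elim by simp
    have e: "Qi w - Qi z = Qi w * (Q z - Q w) * Qi z" by (rule Qi_diff[OF assms w])
    have nQ: "norm (Q z - Q w) = norm (Q w - Q z)" by (simp add: norm_minus_commute)
    have n1: "norm (Qi w - Qi z) \<le> norm (Qi w) * norm (Q w - Q z) * K"
    proof -
      have "norm (Qi w - Qi z) \<le> norm (Qi w) * norm (Q z - Q w) * norm (Qi z)"
        unfolding e by (meson norm_mult_ineq order_trans mult_right_mono norm_ge_zero)
      also have "\<dots> \<le> norm (Qi w) * norm (Q w - Q z) * K"
        unfolding nQ by (rule mult_left_mono[OF K(2)]) simp
      finally show ?thesis .
    qed
    have "norm (Qi w) \<le> norm (Qi z) + norm (Qi w - Qi z)"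
      by (metis add.commute diff_add_cancel norm_triangle_ineq)
    also have "\<dots> \<le> K + norm (Qi w) * (norm (Q w - Q z) * K)"
      using n1 K by (simp add: mult.assoc)
    also have "\<dots> \<le> K + norm (Qi w) * (1/2)"
    proof -
      have "norm (Q w - Q z) * K \<le> 1/2" using elim K by (simp add: field_simps)
      then have "norm (Qi w) * (norm (Q w - Q z) * K) \<le> norm (Qi w) * (1/2)"
        by (rule mult_left_mono) simp
      then show ?thesis by simp
    qed
    finally have "norm (Qi w) \<le> 2 * K" by simp
    then have "norm (Qi w) * norm (Q w - Q z) * K \<le> 2 * K * norm (Q w - Q z) * K"
      using K by (intro mult_right_mono) auto
    then show ?case using n1 by (simp add: mult_ac)
  qed
  have "((\<lambda>w. 2 * K * K * norm (Q w - Q z)) \<longlongrightarrow> 0) (at z within ?S)"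
    using tendsto_mult_right_zero[OF tendsto_norm_zero[OF QT], of "2*K*K"] by simp
  then have "((\<lambda>w. Qi w - Qi z) \<longlongrightarrow> 0) (at z within ?S)"
    by (rule Lim_null_comparison[OF bound])
  then show ?thesis by (rule LIM_zero_cancel)
qed

lemma Qi_cont: "continuous_on {w. cmod w > 1} Qi"
  unfolding continuous_on_def using Qi_tendsto by blast

lemma Phi_cont: "continuous_on {w. cmod w > 1} Phi"
proof -
  have "continuous_on {w. cmod w > 1} (\<lambda>z. Qi z * (l (cnj z) - T) * l z)"
    by (intro continuous_intros Qi_cont continuous_on_compose2[OF l_cont, of _ cnj] l_cont) auto
  then show ?thesis by (simp add: Phi_def R_def)
qed

end



lemma geo_c: "((z::complex) - 1) * (\<Sum>i<N. z^i) = z^N - 1"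
  by (induction N) (simp_all add: algebra_simps)

lemma re_frac: assumes "z \<noteq> 1"
  shows "Re ((z + 1) / (z - 1)) = ((cmod z)^2 - 1) / (cmod (z - 1))^2"
proof -
  have "Re ((z + 1) / (z - 1)) = ((Re z + 1) * (Re z - 1) + Im z * Im z) / (cmod (z - 1))^2"
    by (simp add: Re_divide')
  also have "(Re z + 1) * (Re z - 1) + Im z * Im z = (cmod z)^2 - 1"
  proof -
    have m: "cmod z * cmod z = Re z * Re z + Im z * Im z" by (metis cmod_power2 power2_eq_square)
    show ?thesis by (simp add: power2_eq_square m algebra_simps)
  qed
  finally show ?thesis .
qed

lemma poisson: assumes "r > 1" "N > 0"
  shows "(\<Sum>k<N. 1 / (cmod (zk r N k - 1))^2) = real N * (r^N + 1) / ((r^N - 1) * (r^2 - 1))"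
proof -
  let ?z = "zk r N"
  have cz: "cmod (?z k) = r" for k using assms by (simp add: cmod_zk)
  have z1: "?z k \<noteq> 1" for k using cz[of k] assms by auto
  have rN: "r^N > 1" using assms by (simp add: one_less_power)
  have rNc: "complex_of_real r ^ N - 1 \<noteq> 0"
  proof
    assume "complex_of_real r ^ N - 1 = 0"
    then have "complex_of_real (r^N) = complex_of_real 1" by simp
    then have "r^N = 1" by (simp only: of_real_eq_iff)
    then show False using rN by simp
  qed
  have frac: "(?z k + 1) / (?z k - 1) = (?z k + 1) * (\<Sum>i<N. ?z k ^ i) / (complex_of_real r ^ N - 1)" for k
  proof -
    have "(?z k - 1) * (\<Sum>i<N. ?z k ^ i) = complex_of_real r ^ N - 1"
      using geo_c[of "?z k" N] zk_pow_N[OF assms(2)] by simp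
    then have P: "(\<Sum>i<N. ?z k ^ i) = (complex_of_real r ^ N - 1) / (?z k - 1)"
      using z1[of k] by (simp add: eq_divide_eq mult.commute)
    have z1': "?z k - 1 \<noteq> 0" using z1[of k] by simp
    show ?thesis unfolding P
      by (simp only: times_divide_eq_right divide_divide_eq_left mult_divide_mult_cancel_right[OF rNc])
  qed
  have "(\<Sum>k<N. (?z k + 1) * (\<Sum>i<N. ?z k ^ i)) = (\<Sum>k<N. \<Sum>i<N. ?z k ^ Suc i + ?z k ^ i)"
  proof (intro sum.cong refl)
    fix k
    show "(?z k + 1) * (\<Sum>i<N. ?z k ^ i) = (\<Sum>i<N. ?z k ^ Suc i + ?z k ^ i)"
      by (simp add: sum_distrib_left distrib_right)
  qed
  also have "\<dots> = (\<Sum>i<N. \<Sum>k<N. ?z k ^ Suc i + ?z k ^ i)" by (rule sum.swap)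
  also have "\<dots> = (\<Sum>i<N. (if N dvd Suc i then of_nat N * complex_of_real (r ^ Suc i) else 0)
                          + (if N dvd i then of_nat N * complex_of_real (r ^ i) else 0))"
    by (simp only: sum.distrib root_sum[OF assms(2)])
  also have "\<dots> = (\<Sum>i<N. (if i = N - 1 then of_nat N * complex_of_real (r ^ N) else 0)
                          + (if i = 0 then of_nat N else 0))"
  proof (intro sum.cong refl)
    fix i assume "i \<in> {..<N}"
    then have i: "i < N" by simp
    have a: "N dvd Suc i \<longleftrightarrow> i = N - 1"
    proof
      assume "N dvd Suc i" then have "N \<le> Suc i" by (rule dvd_imp_le) simp
      then show "i = N - 1" using i by simp
    next
      assume "i = N - 1" then show "N dvd Suc i" using assms by simp
    qed
    have b: "N dvd i \<longleftrightarrow> i = 0"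
    proof
      assume "N dvd i" then show "i = 0" using i by (metis dvd_imp_le not_less neq0_conv)
    qed simp
    show "(if N dvd Suc i then of_nat N * complex_of_real (r ^ Suc i) else 0)
          + (if N dvd i then of_nat N * complex_of_real (r ^ i) else 0)
        = (if i = N - 1 then of_nat N * complex_of_real (r ^ N) else 0) + (if i = 0 then of_nat N else 0)"
    proof (cases "i = N - 1")
      case True
      then have "Suc i = N" using assms by simp
      then show ?thesis using a b True by simp
    next
      case False
      then show ?thesis using a b by simp
    qed
  qed
  also have "\<dots> = of_nat N * complex_of_real (r ^ N) + of_nat N"
    using assms by (simp add: sum.distrib sum.delta)
  finally have S: "(\<Sum>k<N. (?z k + 1) * (\<Sum>i<N. ?z k ^ i)) = of_nat N * complex_of_real (r ^ N) + of_nat N" .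
  have "(\<Sum>k<N. (?z k + 1) / (?z k - 1)) = (\<Sum>k<N. (?z k + 1) * (\<Sum>i<N. ?z k ^ i)) / (complex_of_real r ^ N - 1)"
    by (simp add: frac sum_divide_distrib)
  also have "\<dots> = complex_of_real (real N * (r^N + 1) / (r^N - 1))"
    unfolding S by (simp add: field_simps)
  finally have "Re (\<Sum>k<N. (?z k + 1) / (?z k - 1)) = real N * (r^N + 1) / (r^N - 1)" by simp
  moreover have "Re (\<Sum>k<N. (?z k + 1) / (?z k - 1)) = (r^2 - 1) * (\<Sum>k<N. 1 / (cmod (?z k - 1))^2)"
    by (simp add: re_frac[OF z1] cz sum_distrib_left)
  ultimately have "(r^2 - 1) * (\<Sum>k<N. 1 / (cmod (?z k - 1))^2) = real N * (r^N + 1) / (r^N - 1)" by simp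
  moreover have "r^2 - 1 > 0" using assms by (simp add: one_less_power)
  ultimately show ?thesis
  proof -
    assume h: "(r^2 - 1) * (\<Sum>k<N. 1 / (cmod (?z k - 1))^2) = real N * (r^N + 1) / (r^N - 1)"
      and p: "r^2 - 1 > 0"
    define S where "S = (\<Sum>k<N. 1 / (cmod (?z k - 1))^2)"
    have "S = ((r^2 - 1) * S) / (r^2 - 1)" using p by simp
    also have "\<dots> = (real N * (r^N + 1) / (r^N - 1)) / (r^2 - 1)" using h by (simp add: S_def)
    also have "\<dots> = real N * (r^N + 1) / ((r^N - 1) * (r^2 - 1))" by simp
    finally show ?thesis by (simp add: S_def)
  qed
qed




context qsetup begin

definition Sv where "Sv u N = (1 / real N) *\<^sub>R (\<Sum>k<N. Phi (zk u N k))"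

lemma onemW: assumes "u > 1" "N > 0"
  shows "(1 - (1/u^N) *\<^sub>R T^N) * Sv u N = 1"
proof -
  have up: "u^N > 0" using assms by simp
  have e: "1 - (1/u^N) *\<^sub>R T^N = (1/u^N) *\<^sub>R (u^N *\<^sub>R 1 - T^N)"
    using up assms by (simp add: scaleR_diff_right)
  have "(1 - (1/u^N) *\<^sub>R T^N) * Sv u N
      = ((1/u^N) * (1 / real N)) *\<^sub>R ((u^N *\<^sub>R 1 - T^N) * (\<Sum>k<N. Phi (zk u N k)))"
    unfolding e Sv_def by simp
  also have "\<dots> = ((1/u^N) * (1 / real N) * (real N * u^N)) *\<^sub>R 1"
    by (simp add: ident1[OF assms])
  also have "(1/u^N) * (1 / real N) * (real N * u^N) = 1" using up assms by simp
  finally show ?thesis by simp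
qed

lemma W_bound: assumes "(1 - W) * S = (1::'r)" "norm (S - 1) \<le> 1/2"
  shows "norm W \<le> 2 * norm (S - 1)"
proof -
  have WS: "W * S = S - 1" using assms(1) by (simp add: algebra_simps)
  have "W = W * S + W * (1 - S)" by (simp add: algebra_simps)
  also have "\<dots> = (S - 1) + W * (1 - S)" by (simp add: WS)
  finally have "norm W \<le> norm (S - 1) + norm (W * (1 - S))"
    by (metis norm_triangle_ineq)
  also have "norm (W * (1 - S)) \<le> norm W * norm (S - 1)"
    using norm_mult_ineq[of W "1 - S"] by (simp add: norm_minus_commute)
  also have "norm W * norm (S - 1) \<le> norm W * (1/2)"
    by (rule mult_left_mono[OF assms(2)]) simp
  finally show ?thesis by simp
qed

lemma norm_W: "u > 0 \<Longrightarrow> norm ((1/u^N) *\<^sub>R (T^N::'r)) = norm (T^N) / u^N"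
  by simp

lemma zk_diff: "u \<le> t \<Longrightarrow> cmod (zk t N k - zk u N k) = t - u"
proof -
  have "zk t N k - zk u N k = complex_of_real (t - u) * cis (2 * pi * real k / real N)"
    by (simp add: zk_def algebra_simps)
  then show "u \<le> t \<Longrightarrow> ?thesis" by (simp add: norm_mult flip: of_real_diff)
qed

lemma specrad: assumes "\<rho> > 1" shows "\<exists>c. \<forall>N. norm (T^N) \<le> c * \<rho>^N"
proof (rule ccontr)
  assume nb: "\<not> (\<exists>c. \<forall>N. norm (T^N) \<le> c * \<rho>^N)"
  define good where "good t \<longleftrightarrow> 1 < t \<and> (\<exists>c. \<forall>N. norm (T^N) \<le> c * t^N)" for t
  define G where "G = {t. good t}"
  define B where "B = norm T + 2"
  have B1: "B > 1" unfolding B_def using norm_ge_zero[of T] by linarith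
  have goodB: "good B"
  proof -
    have "norm (T^N) \<le> 1 * B^N" for N
    proof -
      have "norm (T^N) \<le> norm T ^ N" by (rule norm_pow)
      also have "\<dots> \<le> B ^ N" by (rule power_mono) (auto simp: B_def)
      finally show ?thesis by simp
    qed
    then show ?thesis using B1 unfolding good_def by (intro conjI exI[of _ 1]) auto
  qed
  have up: "good t'" if gd: "good t" and le: "t \<le> t'" for t t'
  proof -
    obtain c where c: "\<forall>N. norm (T^N) \<le> c * t^N" using gd by (auto simp: good_def)
    have c0: "c \<ge> 0" using c[rule_format, of 0] by (metis norm_ge_zero order_trans power_0 mult.right_neutral)
    have "norm (T^N) \<le> c * t'^N" for N
    proof -
      have "norm (T^N) \<le> c * t^N" using c by blast
      also have "\<dots> \<le> c * t'^N"
        using gd le good_def by (intro mult_left_mono[OF power_mono] c0) auto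
      finally show ?thesis .
    qed
    then show ?thesis using gd le unfolding good_def by (intro conjI exI[of _ c]) auto
  qed
  have gt: "\<rho> < t" if "good t" for t
  proof (rule ccontr)
    assume "\<not> \<rho> < t"
    then have "good \<rho>" using up[OF that] by simp
    then show False using nb by (auto simp: good_def)
  qed
  define ts where "ts = Inf G"
  have Gne: "G \<noteq> {}" using goodB by (auto simp: G_def)
  have bdd: "bdd_below G" using gt by (auto simp: G_def bdd_below_def intro!: exI[of _ \<rho>] less_imp_le)
  have ts_ge: "\<rho> \<le> ts" unfolding ts_def
    by (rule cInf_greatest[OF Gne]) (auto simp: G_def intro: less_imp_le gt)
  have ts_le: "ts \<le> B" unfolding ts_def using bdd goodB by (auto intro!: cInf_lower simp: G_def)
  have below: "\<exists>g. good g \<and> g < t" if "ts < t" for t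
    using that Gne bdd unfolding ts_def by (auto simp: cInf_less_iff G_def)
  have ts1: "1 < ts" using ts_ge assms by simp
  have claim1: "(\<lambda>N. norm (T^N) / ts^N) \<longlonglongrightarrow> 0"
  proof (rule LIMSEQ_I)
    fix e :: real assume e: "e > 0"
    define \<epsilon> where "\<epsilon> = min (e/8) (1/8)"
    have \<epsilon>: "\<epsilon> > 0" "\<epsilon> \<le> e/8" "\<epsilon> \<le> 1/8" using e by (auto simp: \<epsilon>_def)
    define Kc where "Kc = cball 0 (B + 1) \<inter> {z. ts \<le> cmod z}"
    have cK: "compact Kc" unfolding Kc_def
      by (intro compact_Int_closed compact_cball closed_Collect_le continuous_intros)
    have Ksub: "Kc \<subseteq> {w. cmod w > 1}" using ts1 by (auto simp: Kc_def)
    have inK: "zk u N k \<in> Kc" if "ts \<le> u" "u \<le> B + 1" for u N k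
      using that ts1 by (simp add: Kc_def cmod_zk)
    have uc: "uniformly_continuous_on Kc Phi"
      by (rule compact_uniformly_continuous[OF continuous_on_subset[OF Phi_cont Ksub] cK])
    obtain K0 where K0: "K0 > 0" "\<And>z. z \<in> Kc \<Longrightarrow> norm (Phi z) \<le> K0"
    proof -
      have "bounded (Phi ` Kc)"
        by (rule compact_imp_bounded[OF compact_continuous_image[OF continuous_on_subset[OF Phi_cont Ksub] cK]])
      then obtain b where "b > 0" "\<forall>y\<in>Phi ` Kc. norm y \<le> b" by (auto simp: bounded_pos)
      then show ?thesis using that by auto
    qed
    have Sv_bd: "norm (Sv u N) \<le> K0" if "ts \<le> u" "u \<le> B + 1" "N > 0" for u N
    proof -
      have "norm (\<Sum>k<N. Phi (zk u N k)) \<le> (\<Sum>k<N. norm (Phi (zk u N k)))" by (rule norm_sum)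
      also have "\<dots> \<le> (\<Sum>k<N. K0)" by (intro sum_mono K0(2) inK that)
      finally have "norm (\<Sum>k<N. Phi (zk u N k)) \<le> real N * K0" by simp
      then show ?thesis using that by (simp add: Sv_def field_simps)
    qed
    obtain \<delta> where \<delta>: "\<delta> > 0" "\<And>x x'. x \<in> Kc \<Longrightarrow> x' \<in> Kc \<Longrightarrow> dist x' x < \<delta> \<Longrightarrow> dist (Phi x') (Phi x) < \<epsilon>"
      using uc \<epsilon>(1) unfolding uniformly_continuous_on_def by metis
    define t where "t = ts + min (\<delta>/2) 1"
    have t: "ts < t" "t - ts < \<delta>" "t \<le> B + 1" using \<delta> ts_le by (auto simp: t_def)
    obtain g where g: "good g" "g < t" using below[OF t(1)] by blast
    obtain c where c: "\<And>N. norm (T^N) \<le> c * g^N" using g(1) by (auto simp: good_def)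
    have g1: "g > 1" using g(1) by (simp add: good_def)
    have c0: "c \<ge> 0" using c[of 0] by (metis norm_ge_zero order_trans power_0 mult.right_neutral)
    have lim: "(\<lambda>N. c * (g/t)^N * K0) \<longlonglongrightarrow> 0"
    proof -
      have "(\<lambda>N. (g/t)^N) \<longlonglongrightarrow> 0" using g g1 by (intro LIMSEQ_power_zero) auto
      from tendsto_mult_right_zero[OF tendsto_mult_left_zero[OF this, of c], of K0]
      show ?thesis by (simp add: mult_ac)
    qed
    obtain N1 where N1': "\<forall>n\<ge>N1. \<bar>c * (g/t)^n * K0\<bar> < \<epsilon>"
      using LIMSEQ_D[OF lim \<epsilon>(1)] by auto
    have N1: "\<And>N. N \<ge> N1 \<Longrightarrow> c * (g/t)^N * K0 < \<epsilon>"
      using N1' abs_ge_self order_le_less_trans by blast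
    show "\<exists>N0. \<forall>N\<ge>N0. norm (norm (T^N) / ts^N - 0) < e"
    proof (intro exI[of _ "max N1 1"] allI impI)
      fix N assume N: "N \<ge> max N1 1"
      then have N0: "N > 0" by simp
      have tpos: "t > 1" using t(1) ts1 by simp
      have Wt: "norm ((1/t^N) *\<^sub>R (T^N::'r)) \<le> c * (g/t)^N"
      proof -
        have "norm ((1/t^N) *\<^sub>R (T^N::'r)) = norm (T^N) / t^N" using tpos by simp
        also have "\<dots> \<le> c * g^N / t^N" using c[of N] tpos by (simp add: divide_right_mono)
        also have "\<dots> = c * (g/t)^N" by (simp add: power_divide)
        finally show ?thesis .
      qed
      have e1: "norm (Sv t N - 1) < \<epsilon>"
      proof -
        have eqS: "Sv t N - 1 = ((1/t^N) *\<^sub>R T^N) * Sv t N"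
          using onemW[OF tpos N0] by (simp add: algebra_simps)
        have "norm (Sv t N - 1) \<le> norm ((1/t^N) *\<^sub>R (T^N::'r)) * norm (Sv t N)"
          unfolding eqS by (rule norm_mult_ineq)
        also have "\<dots> \<le> c * (g/t)^N * K0"
          using Wt Sv_bd[of t N] t N0 ts1 c0 g1 by (intro mult_mono) auto
        also have "\<dots> < \<epsilon>" using N1 N by simp
        finally show ?thesis .
      qed
      have e2: "norm (Sv ts N - Sv t N) \<le> \<epsilon>"
      proof -
        have "Sv ts N - Sv t N = (1 / real N) *\<^sub>R (\<Sum>k<N. Phi (zk ts N k) - Phi (zk t N k))"
          by (simp add: Sv_def sum_subtractf scaleR_diff_right)
        also have "norm \<dots> \<le> (1 / real N) * (\<Sum>k<N. norm (Phi (zk ts N k) - Phi (zk t N k)))"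
          using norm_sum[of "\<lambda>k. Phi (zk ts N k) - Phi (zk t N k)" "{..<N}"]
          by (simp add: divide_right_mono)
        also have "\<dots> \<le> (1 / real N) * (\<Sum>k<N. \<epsilon>)"
        proof -
          have "norm (Phi (zk ts N k) - Phi (zk t N k)) \<le> \<epsilon>" for k
          proof -
            have "dist (zk ts N k) (zk t N k) < \<delta>"
              using zk_diff[of ts t N k] t by (simp add: dist_norm norm_minus_commute)
            then have "dist (Phi (zk ts N k)) (Phi (zk t N k)) < \<epsilon>"
              using \<delta>(2)[of "zk t N k" "zk ts N k"] inK t ts_le by auto
            then show ?thesis by (simp add: dist_norm)
          qed
          then show ?thesis by (intro mult_left_mono sum_mono) auto
        qed
        also have "\<dots> = \<epsilon>" using N0 by simp
        finally show ?thesis .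
      qed
      have e3: "norm (Sv ts N - 1) < 2 * \<epsilon>"
      proof -
        have "norm (Sv ts N - 1) \<le> norm (Sv ts N - Sv t N) + norm (Sv t N - 1)"
          by (metis diff_add_cancel norm_triangle_ineq add_diff_eq)
        then show ?thesis using e1 e2 by simp
      qed
      have "norm ((1/ts^N) *\<^sub>R (T^N::'r)) \<le> 2 * norm (Sv ts N - 1)"
        by (rule W_bound[OF onemW[OF ts1 N0]]) (use e3 \<epsilon> in simp)
      also have "\<dots> < e" using e3 \<epsilon> by simp
      finally show "norm (norm (T^N) / ts^N - 0) < e" using ts1 by simp
    qed
  qed
  obtain N0 where N0: "\<And>N. N \<ge> N0 \<Longrightarrow> norm (norm (T^N) / ts^N - 0) < 1/2"
    using LIMSEQ_D[OF claim1, of "1/2"] by auto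
  define M0 where "M0 = Suc N0"
  have M0: "norm (T^M0) < ts^M0 / 2"
    using N0[of M0] ts1 by (simp add: M0_def field_simps)
  have "eventually (\<lambda>x. x^M0 > ts^M0/2 \<and> x \<in> {1<..<ts}) (at_left ts)"
  proof (rule eventually_conj)
    have "((\<lambda>x. x^M0) \<longlongrightarrow> ts^M0) (at_left ts)" by (intro tendsto_intros)
    moreover have "ts^M0/2 < ts^M0" using ts1 by simp
    ultimately show "eventually (\<lambda>x. x^M0 > ts^M0/2) (at_left ts)" by (rule order_tendstoD(1))
    show "eventually (\<lambda>x. x \<in> {1<..<ts}) (at_left ts)" by (rule eventually_at_left_real[OF ts1])
  qed
  then obtain t1 where t1: "t1^M0 > ts^M0/2" "1 < t1" "t1 < ts"
    using eventually_happens'[OF trivial_limit_at_left_real] by auto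
  define A where "A = (\<Sum>j\<le>M0. norm (T^j) / t1^j)"
  have t1p: "t1 > 0" using t1 by simp
  have AN: "norm (T^N) \<le> A * t1^N" for N
  proof (induction N rule: less_induct)
    case (less N)
    show ?case
    proof (cases "N \<le> M0")
      case True
      have "norm (T^N) / t1^N \<le> A" unfolding A_def
        by (rule member_le_sum) (use True t1p in auto)
      then show ?thesis using t1p by (simp add: field_simps)
    next
      case False
      then have e: "T^N = T^M0 * T^(N-M0)" by (simp add: power_add[symmetric])
      have "norm (T^N) \<le> norm (T^M0) * norm (T^(N-M0))" unfolding e by (rule norm_mult_ineq)
      also have "\<dots> \<le> t1^M0 * (A * t1^(N-M0))"
        using M0 t1 less[of "N - M0"] False by (intro mult_mono) (auto simp: M0_def)
      also have "\<dots> = A * t1^N" using False by (simp add: power_add[symmetric] mult_ac)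
      finally show ?thesis .
    qed
  qed
  have "good t1" using AN t1 by (auto simp: good_def)
  then have "ts \<le> t1" unfolding ts_def using bdd by (auto intro!: cInf_lower simp: G_def)
  then show False using t1 by simp
qed

end



lemma powr_aux: fixes x \<alpha> C :: real assumes "0 < x" "x \<le> 3" "0 < \<alpha>" "\<alpha> \<le> 1" "C > 0"
  shows "C / x powr (1 + \<alpha>) \<le> 3 * C / x^2"
proof -
  have "x powr (1 - \<alpha>) \<le> 3 powr (1 - \<alpha>)" using assms by (intro powr_mono2) auto
  also have "\<dots> \<le> 3 powr 1" using assms by (intro powr_mono) auto
  finally have a: "x powr (1 - \<alpha>) \<le> 3" by simp
  have "x powr (1 + \<alpha>) * x powr (1 - \<alpha>) = x powr ((1 + \<alpha>) + (1 - \<alpha>))"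
    by (rule powr_add[symmetric])
  also have "(1 + \<alpha>) + (1 - \<alpha>) = 2" by simp
  also have "x powr 2 = x^2" using assms(1) by (simp add: powr_numeral)
  finally have "x^2 = x powr (1 + \<alpha>) * x powr (1 - \<alpha>)" by simp
  also have "\<dots> \<le> x powr (1 + \<alpha>) * 3" using a by (intro mult_left_mono) auto
  finally have b: "x^2 \<le> 3 * x powr (1 + \<alpha>)" by simp
  have p: "x powr (1 + \<alpha>) > 0" "x^2 > 0" using assms by auto
  show ?thesis using b p assms by (simp add: divide_simps)
qed

lemma e_bound: assumes "m > 0" shows "(1 + 1 / real m) ^ m \<le> 3"
proof -
  have "(1 + 1 / real m) ^ m \<le> exp (1 / real m) ^ m"
    by (rule power_mono) (auto intro: add_nonneg_nonneg)
  also have "\<dots> = exp (real m * (1 / real m))" by (rule exp_of_nat_mult[symmetric])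
  also have "\<dots> = exp 1" using assms by simp
  also have "\<dots> \<le> 3" by (rule exp_le)
  finally show ?thesis .
qed

context qsetup begin

lemma F2_bound: assumes "cmod z > 1" "cmod z \<le> 2"
  shows "norm (F2 z) \<le> 3 * C / (cmod (z - 1))^2"
proof -
  have "norm (F2 z) \<le> C / cmod (z - 1) powr (1 + \<alpha>)" using est[OF assms(1)] by (simp add: F2_def)
  also have "\<dots> \<le> 3 * C / (cmod (z - 1))^2"
  proof (rule powr_aux)
    show "0 < cmod (z - 1)" using assms by auto
    have "cmod (z - 1) \<le> cmod z + 1" by (metis norm_one norm_triangle_ineq4)
    then show "cmod (z - 1) \<le> 3" using assms by simp
  qed (use apos ale Cpos in auto)
  finally show ?thesis .
qed

theorem power_bounded: "\<exists>M. \<forall>n::nat. n \<ge> 1 \<longrightarrow> norm (T^n) \<le> M"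
proof (intro exI[of _ "72 * C"] allI impI)
  fix n :: nat assume n1: "n \<ge> 1"
  define m where "m = n + 2"
  define r where "r = 1 + 1 / real m"
  have m3: "real m \<ge> 3" using n1 by (simp add: m_def)
  have r1: "r > 1" using m3 by (simp add: r_def)
  have r2: "r \<le> 2" using m3 by (simp add: r_def)
  define \<rho> where "\<rho> = (1 + r) / 2"
  have \<rho>: "\<rho> > 1" "\<rho> < r" using r1 by (auto simp: \<rho>_def)
  obtain c where c: "\<And>N. norm (T^N) \<le> c * \<rho>^N" using specrad[OF \<rho>(1)] by blast
  have c0: "c \<ge> 0" using c[of 0] by (metis norm_ge_zero order_trans power_0 mult.right_neutral)
  define q where "q = \<rho> / r"
  have q: "0 \<le> q" "q < 1" using \<rho> r1 by (auto simp: q_def)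
  have "(\<lambda>N. real N * q^N) \<longlonglongrightarrow> 0" using q by (intro powser_times_n_limit_0) simp
  then obtain N1 where N1: "\<forall>N\<ge>N1. norm (real N * q^N - 0) < 1 / (2 * (c + 1))"
    using LIMSEQ_D[of _ 0 "1 / (2 * (c + 1))"] c0 by fastforce
  obtain N2 where N2: "3 < r ^ N2" using real_arch_pow[OF r1] by blast
  define N where "N = N1 + N2 + n + 1"
  have NN1: "N \<ge> N1" and NN2: "N \<ge> N2" and Nn: "n < N" by (auto simp: N_def)
  have N0: "N > 0" using Nn by simp
  have rN3: "r^N \<ge> 3" using N2 power_increasing[OF NN2 less_imp_le[OF r1]] by simp
  have rNp: "r^N > 0" using r1 by simp
  define w where "w = norm (T^N) / r^N"
  have w0: "w \<ge> 0" using rNp by (simp add: w_def)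
  have Nw: "real N * w \<le> 1/2"
  proof -
    have "w \<le> c * q^N"
    proof -
      have "w \<le> c * \<rho>^N / r^N" unfolding w_def using c[of N] rNp by (simp add: divide_right_mono)
      then show ?thesis by (simp add: q_def power_divide)
    qed
    then have "real N * w \<le> real N * (c * q^N)" by (intro mult_left_mono) auto
    then have "real N * w \<le> c * (real N * q^N)" by (simp add: mult_ac)
    also have "\<dots> \<le> c * (1 / (2 * (c + 1)))"
      using N1[rule_format, OF NN1] q c0 by (intro mult_left_mono) auto
    also have "\<dots> \<le> 1/2" using c0 by (simp add: field_simps)
    finally show ?thesis .
  qed
  have "1 * w \<le> real N * w" using N0 w0 by (intro mult_right_mono) auto
  then have w_half: "w \<le> 1/2" using Nw by linarith
  define W where "W = (1 / r^N) *\<^sub>R (T^N::'r)"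
  have nW: "norm W = w" using rNp by (simp add: W_def w_def)
  define S where "S = (\<Sum>k<N. F2 (zk r N k) * l ((zk r N k)^(n+2)))"
  have D: "r^N *\<^sub>R 1 - T^N = r^N *\<^sub>R (1 - W)" using rNp r1 by (simp add: W_def scaleR_diff_right)
  have Tc: "T^n * T^N = T^N * T^n" by (metis power_add add.commute)
  have TnN: "r^N *\<^sub>R (T^(n+N)::'r) = r^(2*N) *\<^sub>R (W * T^n)"
    using rNp Tc by (simp add: W_def power_add mult.commute power_mult_distrib power2_eq_square power_mult)
  have id: "r^(2*N) *\<^sub>R ((1 - W) * (1 - W) * S)
      = r^(2*N) *\<^sub>R (real N *\<^sub>R (real (n+1) *\<^sub>R T^n + real (N-1-n) *\<^sub>R (W * T^n)))"
  proof -
    have "r^(2*N) *\<^sub>R ((1 - W) * (1 - W) * S) = (r^N *\<^sub>R 1 - T^N) * (r^N *\<^sub>R 1 - T^N) * S"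
      unfolding D by (simp add: power_mult power2_eq_square mult.commute[of 2])
    also have "\<dots> = real N *\<^sub>R (real (n+1) *\<^sub>R (r^(2*N) *\<^sub>R T^n) + real (N-1-n) *\<^sub>R (r^N *\<^sub>R T^(n+N)))"
      unfolding S_def by (rule ident2[OF r1 N0 Nn])
    also have "\<dots> = r^(2*N) *\<^sub>R (real N *\<^sub>R (real (n+1) *\<^sub>R T^n + real (N-1-n) *\<^sub>R (W * T^n)))"
      unfolding TnN by (simp add: scaleR_add_right mult_ac)
    finally show ?thesis .
  qed
  have id2: "(1 - W) * (1 - W) * S = real N *\<^sub>R (real (n+1) *\<^sub>R T^n + real (N-1-n) *\<^sub>R (W * T^n))"
  proof -
    have nz: "r^(2*N) \<noteq> 0" using r1 by simp
    show ?thesis using id nz by (metis scaleR_cancel_left)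
  qed
  have key: "(real N * real (n+1)) *\<^sub>R T^n = (1 - W) * (1 - W) * S - (real N * real (N-1-n)) *\<^sub>R (W * T^n)"
    unfolding id2 by (simp add: scaleR_add_right)
  have n1W: "norm (1 - W) \<le> 2"
  proof -
    have "norm (1 - W) \<le> norm (1::'r) + norm W" by (rule norm_triangle_ineq4)
    also have "\<dots> \<le> 2" using one_le nW w_half by simp
    finally show ?thesis .
  qed
  have nS: "norm S \<le> 9 * C * real N * real m"
  proof -
    have "norm S \<le> (\<Sum>k<N. norm (F2 (zk r N k) * l ((zk r N k)^(n+2))))" unfolding S_def by (rule norm_sum)
    also have "\<dots> \<le> (\<Sum>k<N. 3 * C / (cmod (zk r N k - 1))^2 * 3)"
    proof (rule sum_mono)
      fix k
      have cz: "cmod (zk r N k) = r" using r1 by (simp add: cmod_zk)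
      have "norm (F2 (zk r N k) * l ((zk r N k)^(n+2))) \<le> norm (F2 (zk r N k)) * norm (l ((zk r N k)^(n+2)))"
        by (rule norm_mult_ineq)
      also have "\<dots> \<le> 3 * C / (cmod (zk r N k - 1))^2 * 3"
      proof (rule mult_mono)
        show "norm (F2 (zk r N k)) \<le> 3 * C / (cmod (zk r N k - 1))^2"
          using F2_bound[of "zk r N k"] cz r1 r2 by simp
        have "norm (l ((zk r N k)^(n+2))) \<le> cmod ((zk r N k)^(n+2))" by (rule l_norm)
        also have "\<dots> = r^m" by (simp only: norm_power cz m_def)
        also have "\<dots> \<le> 3" unfolding r_def using e_bound[of m] by (simp add: m_def)
        finally show "norm (l ((zk r N k)^(n+2))) \<le> 3" .
      qed (use Cpos in auto)
      finally show "norm (F2 (zk r N k) * l ((zk r N k)^(n+2))) \<le> 3 * C / (cmod (zk r N k - 1))^2 * 3" .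
    qed
    also have "\<dots> = 9 * C * (\<Sum>k<N. 1 / (cmod (zk r N k - 1))^2)"
      by (simp add: sum_distrib_left)
    also have "\<dots> = 9 * C * (real N * (r^N + 1) / ((r^N - 1) * (r^2 - 1)))"
      by (simp add: poisson[OF r1 N0])
    also have "\<dots> \<le> 9 * C * (real N * real m)"
    proof (rule mult_left_mono)
      have a: "(r^N + 1) / (r^N - 1) \<le> 2" using rN3 by (simp add: divide_simps)
      have b: "r^2 - 1 \<ge> 2 / real m" using m3 by (simp add: r_def power2_eq_square field_simps)
      have rm1: "r^2 - 1 > 0" using r1 by (simp add: one_less_power)
      have "real N * (r^N + 1) / ((r^N - 1) * (r^2 - 1)) = real N * ((r^N + 1) / (r^N - 1)) / (r^2 - 1)"
        by simp
      also have "\<dots> \<le> real N * 2 / (r^2 - 1)"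
        using a rm1 by (intro divide_right_mono mult_left_mono) auto
      also have "\<dots> \<le> real N * 2 / (2 / real m)"
        using b m3 rm1 by (intro divide_left_mono mult_pos_pos) auto
      also have "\<dots> = real N * real m" using m3 by simp
      finally show "real N * (r^N + 1) / ((r^N - 1) * (r^2 - 1)) \<le> real N * real m" .
    qed (use Cpos in simp)
    finally show ?thesis by simp
  qed
  define nT where "nT = norm (T^n)"
  have "real N * real (n+1) * nT = norm ((real N * real (n+1)) *\<^sub>R T^n)" by (simp add: nT_def)
  also have "\<dots> \<le> norm ((1 - W) * (1 - W) * S) + norm ((real N * real (N-1-n)) *\<^sub>R (W * T^n))"
    unfolding key by (rule norm_triangle_ineq4)
  also have "norm ((1 - W) * (1 - W) * S) \<le> 4 * norm S"
  proof -
    have "norm ((1 - W) * (1 - W) * S) \<le> norm (1 - W) * norm (1 - W) * norm S"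
      by (meson norm_mult_ineq order_trans mult_right_mono norm_ge_zero)
    also have "\<dots> \<le> 2 * 2 * norm S" using n1W by (intro mult_mono) auto
    finally show ?thesis by simp
  qed
  also have "norm ((real N * real (N-1-n)) *\<^sub>R (W * T^n)) \<le> real N / 2 * nT"
  proof -
    have "norm ((real N * real (N-1-n)) *\<^sub>R (W * T^n)) \<le> (real N * real (N-1-n)) * (w * nT)"
      using norm_mult_ineq[of W "T^n"] nW by (simp add: nT_def mult_left_mono)
    also have "\<dots> \<le> real N * (real N * w) * nT"
    proof -
      have "real (N-1-n) \<le> real N" by simp
      then have "real N * real (N-1-n) * w \<le> real N * real N * w"
        using w0 by (intro mult_right_mono mult_left_mono) auto
      then have "real N * real (N-1-n) * w * nT \<le> real N * real N * w * nT"
        by (rule mult_right_mono) (simp add: nT_def)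
      then show ?thesis by (simp add: mult_ac)
    qed
    also have "\<dots> \<le> real N * (1/2) * nT"
      using Nw by (intro mult_right_mono mult_left_mono) (auto simp: nT_def)
    finally show ?thesis by simp
  qed
  finally have ineq: "real N * real (n+1) * nT \<le> 4 * norm S + real N / 2 * nT" by simp
  have "real N * (real n + 1/2) * nT \<le> 4 * norm S" using ineq by (simp add: algebra_simps)
  also have "\<dots> \<le> 36 * C * real N * real m" using nS by simp
  finally have f: "real N * (real n + 1/2) * nT \<le> real N * (36 * C * real m)" by (simp add: mult_ac)
  then have "(real n + 1/2) * nT \<le> 36 * C * real m" using N0 by (simp add: mult.assoc)
  moreover have "36 * C * real m \<le> (real n + 1/2) * (72 * C)"
    using n1 Cpos by (simp add: m_def algebra_simps)
  ultimately have "(real n + 1/2) * nT \<le> (real n + 1/2) * (72 * C)" by linarith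
  then show "norm (T^n) \<le> 72 * C" unfolding nT_def
    by (rule mult_left_le_imp_le) simp
qed

end



definition qc :: "complex \<Rightarrow> quat" where "qc z = Quat (Re z) (Im z) 0 0"

lemma qc_mult: "qmult (qc z) (qc w) = qc (z * w)" by (simp add: qc_def qmult_def)
lemma qc_add: "qadd (qc z) (qc w) = qc (z + w)" by (simp add: qc_def qadd_def)
lemma qc_real: "qof_real c = qc (complex_of_real c)" by (simp add: qc_def qof_real_def)
lemma qc_cnj: "qcnj (qc z) = qc (cnj z)" by (simp add: qc_def qcnj_def)
lemma qc_norm: "qnorm (qc z) = cmod z" by (simp add: qc_def qnorm_def cmod_def)
lemma qc_Re: "qRe (qc z) = Re z" by (simp add: qc_def)
lemma qc_sub: "qsub (qc z) (qof_real 1) = qc (z - 1)" by (simp add: qc_def qsub_def qof_real_def)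

definition app :: "'a::real_normed_vector endo \<Rightarrow> 'a \<Rightarrow> 'a" where
  "app a = blinfun_apply (Rep_endo a)"
definition E :: "('a::real_normed_vector \<Rightarrow> 'a) \<Rightarrow> 'a endo" where
  "E f = Abs_endo (Blinfun f)"

lemma app_E: "bounded_linear f \<Longrightarrow> app (E f) = f"
  by (simp add: app_def E_def Abs_endo_inverse bounded_linear_Blinfun_apply)
lemma app_inj: "app a = app b \<Longrightarrow> a = b"
  unfolding app_def by (metis Rep_endo_inject blinfun_apply_inject)
lemma app_mult: "app (a * b) = app a \<circ> app b"
  by (simp add: app_def times_endo.rep_eq fun_eq_iff)
lemma app_add: "app (a + b) = (\<lambda>v. app a v + app b v)"
  by (simp add: app_def plus_endo.rep_eq fun_eq_iff blinfun.add_left)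
lemma app_diff: "app (a - b) = (\<lambda>v. app a v - app b v)"
  by (simp add: app_def minus_endo.rep_eq fun_eq_iff blinfun.diff_left)
lemma app_scaleR: "app (c *\<^sub>R a) = (\<lambda>v. c *\<^sub>R app a v)"
  by (simp add: app_def scaleR_endo.rep_eq fun_eq_iff blinfun.scaleR_left)
lemma app_one: "app 1 = (\<lambda>v. v)"
  by (simp add: app_def one_endo.rep_eq fun_eq_iff)
lemma app_norm: "norm a = onorm (app a)"
  by (simp add: app_def norm_endo.rep_eq norm_blinfun.rep_eq)
lemma app_pow: "app (a ^ n) = app a ^^ n"
  by (induction n) (simp_all add: app_one app_mult id_def)

lemma lm_bl:
  assumes X: "two_sided_qbanach lm rm"
  shows "bounded_linear (lm a)"
proof -
  have add: "lm a (v + w) = lm a v + lm a w" for v w using X by (simp add: two_sided_qbanach_def)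
  have comm: "qmult a (qof_real c) = qmult (qof_real c) a" for c
    by (simp add: qmult_def qof_real_def algebra_simps)
  have sc: "lm a (c *\<^sub>R v) = c *\<^sub>R lm a v" for c v
  proof -
    have r: "\<And>r v. lm (qof_real r) v = r *\<^sub>R v" and m: "\<And>a b v. lm (qmult a b) v = lm a (lm b v)"
      using X by (simp_all add: two_sided_qbanach_def)
    have "lm a (c *\<^sub>R v) = lm a (lm (qof_real c) v)" by (simp add: r)
    also have "\<dots> = lm (qmult (qof_real c) a) v" by (simp add: m[symmetric] comm)
    also have "\<dots> = c *\<^sub>R lm a v" by (simp add: m r)
    finally show ?thesis .
  qed
  have nb: "norm (lm a v) \<le> norm v * qnorm a" for v using X by (simp add: two_sided_qbanach_def mult.commute)
  show ?thesis
    by (rule bounded_linear_intro[of _ "qnorm a"]) (auto simp: add sc nb)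
qed

theorem theorem3p8:
  fixes lm :: "quat \<Rightarrow> 'x::banach \<Rightarrow> 'x" and rm :: "'x \<Rightarrow> quat \<Rightarrow> 'x"
    and T :: "'x \<Rightarrow> 'x" and C \<alpha> :: real
  assumes X: "two_sided_qbanach lm rm"
    and T: "T \<in> qops rm"
    and bdry: "\<forall>s. qnorm s = 1 \<and> s \<in> S_spectrum rm T \<longrightarrow> s = qof_real 1"
    and outside: "\<forall>s. qnorm s > 1 \<longrightarrow> s \<in> S_resolvent_set rm T"
    and C: "C > 0" and \<alpha>: "0 < \<alpha>" "\<alpha> \<le> 1"
    and est: "\<forall>s. qnorm s > 1 \<longrightarrow>
               onorm (SL2 lm s T) \<le> C / (qnorm (qsub s (qof_real 1))) powr (1 + \<alpha>)"
  shows "\<exists>M. \<forall>n::nat. n \<ge> 1 \<longrightarrow> onorm (T ^^ n) \<le> M"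
proof -
  have Tbl: "bounded_linear T" using T by (simp add: qops_def)
  define TE where "TE = E T"
  define l where "l z = E (lm (qc z))" for z
  define Qi where "Qi z = E (inv (Qop (qc z) T))" for z
  have appT: "app TE = T" using Tbl by (simp add: TE_def app_E)
  have appl: "app (l z) = lm (qc z)" for z using lm_bl[OF X] by (simp add: l_def app_E)
  have lmr: "\<And>r v. lm (qof_real r) v = r *\<^sub>R v" and lmm: "\<And>a b v. lm (qmult a b) v = lm a (lm b v)"
    and lma: "\<And>a b v. lm (qadd a b) v = lm a v + lm b v" and lmn: "\<And>a v. norm (lm a v) = qnorm a * norm v"
    using X by (simp_all add: two_sided_qbanach_def)
  have inv_ok: "bounded_linear (inv (Qop (qc z) T)) \<and> inv (Qop (qc z) T) \<circ> Qop (qc z) T = id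
      \<and> Qop (qc z) T \<circ> inv (Qop (qc z) T) = id" if "cmod z > 1" for z
  proof -
    have "qc z \<in> S_resolvent_set rm T" using outside that by (simp add: qc_norm)
    then obtain B where B: "B \<in> qops rm" "B \<circ> Qop (qc z) T = id" "Qop (qc z) T \<circ> B = id"
      by (auto simp: S_resolvent_set_def qinvertible_def)
    have "inv (Qop (qc z) T) = B" by (rule inv_unique_comp[OF B(3) B(2)])
    then show ?thesis using B by (simp add: qops_def)
  qed
  have appQi: "app (Qi z) = inv (Qop (qc z) T)" if "cmod z > 1" for z
    using inv_ok[OF that] by (simp add: Qi_def app_E)
  have appQ: "app (TE*TE - (2*Re z) *\<^sub>R TE + (cmod z)^2 *\<^sub>R 1) = Qop (qc z) T" for z
    by (simp add: app_diff app_add app_mult app_scaleR app_one appT Qop_def qc_Re qc_norm fun_eq_iff)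
  interpret qs: qsetup TE l Qi C \<alpha>
  proof
    show "norm (1::'x endo) \<le> 1" by (simp add: norm_endo.rep_eq one_endo.rep_eq norm_blinfun_id_le)
  next
    fix z w show "l (z * w) = l z * l w"
      by (rule app_inj) (simp add: appl app_mult qc_mult[symmetric] lmm fun_eq_iff)
  next
    fix z w show "l (z + w) = l z + l w"
      by (rule app_inj) (simp add: appl app_add qc_add[symmetric] lma fun_eq_iff)
  next
    fix c show "l (complex_of_real c) = c *\<^sub>R 1"
      by (rule app_inj) (simp add: appl app_scaleR app_one qc_real[symmetric] lmr fun_eq_iff)
  next
    fix z show "norm (l z) \<le> cmod z"
      unfolding app_norm appl by (rule onorm_bound) (auto simp: lmn qc_norm)
  next
    fix z :: complex assume z: "cmod z > 1"
    show "Qi z * (TE*TE - (2*Re z) *\<^sub>R TE + (cmod z)^2 *\<^sub>R 1) = 1"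
      by (rule app_inj) (simp add: app_mult appQ appQi[OF z] inv_ok[OF z] app_one id_def)
  next
    fix z :: complex assume z: "cmod z > 1"
    show "(TE*TE - (2*Re z) *\<^sub>R TE + (cmod z)^2 *\<^sub>R 1) * Qi z = 1"
      by (rule app_inj) (simp add: app_mult appQ appQi[OF z] inv_ok[OF z] app_one id_def)
  next
    fix z :: complex assume z: "cmod z > 1"
    have "app (Qi z * Qi z * (l (cnj z * cnj z) - 2 *\<^sub>R (TE * l (cnj z)) + TE*TE)) = SL2 lm (qc z) T"
      by (simp add: SL2_def Let_def app_mult app_add app_diff app_scaleR appl appT appQi[OF z]
          qc_cnj qc_mult fun_eq_iff)
    then have "norm (Qi z * Qi z * (l (cnj z * cnj z) - 2 *\<^sub>R (TE * l (cnj z)) + TE*TE)) = onorm (SL2 lm (qc z) T)"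
      by (simp add: app_norm)
    also have "\<dots> \<le> C / cmod (z - 1) powr (1 + \<alpha>)"
      using est[rule_format, of "qc z"] z by (simp add: qc_norm qc_sub)
    finally show "norm (Qi z * Qi z * (l (cnj z * cnj z) - 2 *\<^sub>R (TE * l (cnj z)) + TE*TE)) \<le> C / cmod (z - 1) powr (1 + \<alpha>)" .
  qed (use C \<alpha> in auto)
  obtain M where M: "\<forall>n::nat. n \<ge> 1 \<longrightarrow> norm (TE^n) \<le> M" using qs.power_bounded by blast
  have "onorm (T ^^ n) = norm (TE ^ n)" for n by (simp add: app_norm app_pow appT)
  then show ?thesis using M by auto
qed


end
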